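(* Let $f:[0,\infty)\to\mathbb{R}$ be a continuous superquadratic function and let $A\in\mathbb{M}_n^+$ be positive semidefinite. Then for every orthonormal basis $\{\mathbf{u}_1,\dots,\mathbf{u}_n\}$ of $\mathbb{C}^n$, $$\sum_{j=1}^n f(\langle A\mathbf{u}_j,\mathbf{u}_j\rangle)+\sum_{j=1}^n\big\langle f(|A-\langle A\mathbf{u}_j,\mathbf{u}_j\rangle I|)\mathbf{u}_j,\mathbf{u}_j\big\rangle\le \mathrm{Tr}\, f(A).$$ Moreover, equality holds if $f$ is non-negative and $\mathbf{u}_1,\dots,\mathbf{u}_n$ are eigenvectors of $A$.
   Context: A function $f:[0,\infty)\to\mathbb{R}$ is called superquadratic if for every $s\ge 0$ there exists a constant $C_s\in\mathbb{R}$ such that $f(t)\ge f(s)+C_s(t-s)+f(|t-s|)$ for all $t\ge0$. $f(X)$ is defined by the spectral functional calculus, $|X|=(X^*X)^{1/2}$, $\langle\cdot,\cdot\rangle$ is the standard inner product on $\mathbb{C}^n$, and $\mathrm{Tr}$ is the usual matrix trace. *)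

theory Defs
  imports "HOL-Analysis.Analysis" "HOL-Library.Complex_Order"
begin

text \<open>Complex n x n matrices are rendered as complex^'n^'n (n = CARD('n)).\<close>

definition superquadratic :: "(real \<Rightarrow> real) \<Rightarrow> bool" where
  "superquadratic f \<longleftrightarrow>
     (\<forall>s\<ge>0. \<exists>C. \<forall>t\<ge>0. f t \<ge> f s + C * (t - s) + f \<bar>t - s\<bar>)"

definition cinner :: "complex^'n \<Rightarrow> complex^'n \<Rightarrow> complex" where
  "cinner x y = (\<Sum>i\<in>UNIV. x$i * cnj (y$i))"

definition adjoint_mat :: "complex^'n^'n \<Rightarrow> complex^'n^'n" where
  "adjoint_mat A = (\<chi> i j. cnj (A$j$i))"

definition unitary_mat :: "complex^'n^'n \<Rightarrow> bool" where
  "unitary_mat U \<longleftrightarrow> adjoint_mat U ** U = mat 1 \<and> U ** adjoint_mat U = mat 1"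

definition hermitian_mat :: "complex^'n^'n \<Rightarrow> bool" where
  "hermitian_mat A \<longleftrightarrow> adjoint_mat A = A"

text \<open>Positive semidefinite: \<langle>Ax,x\<rangle> \<ge> 0 for all x (complex order: real and nonnegative).\<close>
definition psd_mat :: "complex^'n^'n \<Rightarrow> bool" where
  "psd_mat A \<longleftrightarrow> (\<forall>x. cinner (A *v x) x \<ge> 0)"

definition diag_real_mat :: "complex^'n^'n \<Rightarrow> bool" where
  "diag_real_mat D \<longleftrightarrow> (\<forall>i j. i \<noteq> j \<longrightarrow> D$i$j = 0) \<and> (\<forall>i. D$i$i \<in> \<real>)"

definition mat_fun :: "(real \<Rightarrow> real) \<Rightarrow> complex^'n^'n \<Rightarrow> complex^'n^'n" where
  "mat_fun f X = (THE B. \<exists>U D. unitary_mat U \<and> diag_real_mat D \<and>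
       X = U ** D ** adjoint_mat U \<and>
       B = U ** (\<chi> i j. if i = j then complex_of_real (f (Re (D$i$i))) else 0) ** adjoint_mat U)"

definition mat_abs :: "complex^'n^'n \<Rightarrow> complex^'n^'n" where
  "mat_abs X = mat_fun sqrt (adjoint_mat X ** X)"

definition orthonormal_basis :: "('n::finite \<Rightarrow> complex^'n) \<Rightarrow> bool" where
  "orthonormal_basis u \<longleftrightarrow> (\<forall>j k. cinner (u j) (u k) = (if j = k then 1 else 0))"

definition is_eigenvector :: "complex^'n^'n \<Rightarrow> complex^'n \<Rightarrow> bool" where
  "is_eigenvector A v \<longleftrightarrow> v \<noteq> 0 \<and> (\<exists>c. A *v v = c *s v)"

end

theory Submission
  imports Defs
begin

lemma cinner_add_left: "cinner (x + y) z = cinner x z + cinner y z"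
  by (simp add: cinner_def distrib_right sum.distrib)
lemma cinner_add_right: "cinner x (y + z) = cinner x y + cinner x z"
  by (simp add: cinner_def distrib_left sum.distrib)
lemma cinner_diff_left: "cinner (x - y) z = cinner x z - cinner y z"
  by (simp add: cinner_def left_diff_distrib sum_subtractf)
lemma cinner_scale_left: "cinner (c *s x) y = c * cinner x y"
  by (simp add: cinner_def sum_distrib_left mult.assoc)
lemma cinner_scale_right: "cinner x (c *s y) = cnj c * cinner x y"
  by (simp add: cinner_def sum_distrib_left mult_ac)
lemma cinner_sum_left: "cinner (\<Sum>l\<in>K. f l) z = (\<Sum>l\<in>K. cinner (f l) z)"
  unfolding cinner_def sum_component sum_distrib_right by (rule sum.swap)
lemma cinner_commute: "cinner y x = cnj (cinner x y)"
  by (simp add: cinner_def mult.commute)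
lemma cinner_zero_left[simp]: "cinner 0 x = 0"
  by (simp add: cinner_def)
lemma cinner_self: "cinner x x = complex_of_real ((norm x)^2)"
proof -
  have "(norm x)^2 = (\<Sum>i\<in>UNIV. (cmod (x$i))^2)"
    by (simp add: norm_vec_def L2_set_def sum_nonneg)
  hence "complex_of_real ((norm x)^2) = (\<Sum>i\<in>UNIV. complex_of_real ((cmod (x$i))^2))" by simp
  also have "\<dots> = cinner x x" unfolding cinner_def
    by (rule sum.cong) (auto simp: complex_norm_square[symmetric])
  finally show ?thesis by simp
qed
lemma cinner_self_eq0: "cinner x x = 0 \<longleftrightarrow> x = 0"
  by (simp add: cinner_self)
lemma cinner_mat: "cinner (M *v x) y = cinner x (adjoint_mat M *v y)"
proof -
  have "cinner (M *v x) y = (\<Sum>i\<in>UNIV. \<Sum>j\<in>UNIV. M$i$j * x$j * cnj (y$i))"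
    unfolding cinner_def matrix_vector_mult_def by (simp add: sum_distrib_right)
  also have "\<dots> = (\<Sum>j\<in>UNIV. \<Sum>i\<in>UNIV. M$i$j * x$j * cnj (y$i))"
    by (rule sum.swap)
  also have "\<dots> = cinner x (adjoint_mat M *v y)"
    unfolding cinner_def matrix_vector_mult_def adjoint_mat_def
    by (simp add: sum_distrib_left mult_ac)
  finally show ?thesis .
qed
lemma mat_vec_add: fixes M :: "complex^'n^'m" shows "M *v (x + y) = M *v x + M *v y"
  by (simp add: matrix_vector_right_distrib)
lemma mat_vec_scale: fixes M :: "complex^'n^'m" shows "M *v (c *s x) = c *s (M *v x)"
  by (simp add: vec_eq_iff matrix_vector_mult_def sum_distrib_left mult.left_commute)
lemma mat_vec_diff: fixes M :: "complex^'n^'m" shows "M *v (x - y) = M *v x - M *v y"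
  by (rule matrix_vector_mult_diff_distrib)

lemma psd_herm:
  assumes "psd_mat A"
  shows "cinner (A *v x) y = cinner x (A *v y)"
proof -
  have real: "Im (cinner (A *v z) z) = 0" for z
    using assms unfolding psd_mat_def less_eq_complex_def by auto
  define B where "B = (\<lambda>x y. cinner (A *v x) y)"
  have expand: "B (x + c *s y) (x + c *s y) = B x x + cnj c * B x y + c * B y x + c * cnj c * B y y" for c
    unfolding B_def by (simp add: mat_vec_add mat_vec_scale cinner_add_left cinner_add_right
        cinner_scale_left cinner_scale_right algebra_simps)
  have r: "Im (B z z) = 0" for z using real B_def by simp
  have 1: "Im (B x y + B y x) = 0"
    using arg_cong[where f=Im, OF expand[of 1]] r[of x] r[of y] r[of "x + 1 *s y"] by simp
  have 2: "Re (B y x - B x y) = 0"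
    using arg_cong[where f=Im, OF expand[of \<i>]] r[of x] r[of y] r[of "x + \<i> *s y"]
    by simp
  have "B x y = cnj (B y x)" using 1 2 by (simp add: complex_eq_iff)
  thus ?thesis unfolding B_def by (metis cinner_commute)
qed

lemma quad_zero:
  fixes p q :: real
  assumes "\<And>t. t*p + t^2*q \<le> 0"
  shows "p = 0"
proof (rule ccontr)
  assume p: "p \<noteq> 0"
  define a where "a = \<bar>q\<bar> + 1"
  have a: "a > 0" "\<bar>q\<bar> < a" by (auto simp: a_def)
  define t where "t = p / (2*a)"
  have "t^2*q \<ge> - (t^2 * \<bar>q\<bar>)"
    using mult_left_mono[of "-\<bar>q\<bar>" q "t^2"] by simp
  moreover have "t*p - t^2 * \<bar>q\<bar> = p^2 * (2*a - \<bar>q\<bar>) / (4*a^2)"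
    using a by (simp add: t_def field_simps power2_eq_square)
  moreover have "p^2 * (2*a - \<bar>q\<bar>) / (4*a^2) > 0"
    using a p by (intro divide_pos_pos mult_pos_pos) auto
  ultimately have "t*p + t^2*q > 0" by linarith
  with assms[of t] show False by linarith
qed

lemma cont_cinner[continuous_intros]:
  "continuous_on S f \<Longrightarrow> continuous_on S g \<Longrightarrow> continuous_on S (\<lambda>x. cinner (f x) (g x))"
  unfolding cinner_def by (intro continuous_intros)

lemma cont_matvec[continuous_intros]:
  fixes A :: "complex^'n^'m"
  shows "continuous_on S f \<Longrightarrow> continuous_on S (\<lambda>x. A *v f x)"
  unfolding matrix_vector_mult_def by (intro continuous_intros)

lemma cinner_self_Re: "Re (cinner x x) = (norm x)^2"
  by (simp add: cinner_self)

lemma cinner_scale_both: "cinner (A *v (complex_of_real c *s y)) (complex_of_real c *s y)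
   = complex_of_real (c^2) * cinner (A *v y) y"
  by (simp add: mat_vec_scale cinner_scale_left cinner_scale_right power2_eq_square)

lemma eig_exists:
  fixes A :: "complex^'n^'n" and w :: "'n \<Rightarrow> complex^'n"
  assumes herm: "\<And>x y. cinner (A *v x) y = cinner x (A *v y)"
  and eigw: "\<And>l. l \<in> K \<Longrightarrow> \<exists>r::real. A *v w l = complex_of_real r *s w l"
  and nz: "x1 \<noteq> 0" "\<And>l. l \<in> K \<Longrightarrow> cinner x1 (w l) = 0"
  shows "\<exists>x. (\<forall>l\<in>K. cinner x (w l) = 0) \<and> cinner x x = 1 \<and> (\<exists>r::real. A *v x = complex_of_real r *s x)"
proof -
  define S where "S = {x. \<forall>l\<in>K. cinner x (w l) = 0}"
  have S_add: "x + y \<in> S" if "x \<in> S" "y \<in> S" for x y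
    using that by (simp add: S_def cinner_add_left)
  have S_scale: "c *s x \<in> S" if "x \<in> S" for x c
    using that by (simp add: S_def cinner_scale_left)
  have S_diff: "x - y \<in> S" if "x \<in> S" "y \<in> S" for x y
    using that by (simp add: S_def cinner_diff_left)
  have S_inv: "A *v x \<in> S" if "x \<in> S" for x
  proof -
    have "cinner (A *v x) (w l) = 0" if l: "l \<in> K" for l
    proof -
      obtain r where r: "A *v w l = complex_of_real r *s w l" using eigw[OF l] by blast
      have "cinner (A *v x) (w l) = cinner x (A *v w l)" by (rule herm)
      also have "\<dots> = 0" using \<open>x \<in> S\<close> l by (simp add: r cinner_scale_right S_def)
      finally show ?thesis .
    qed
    thus ?thesis by (simp add: S_def)
  qed
  have realq: "Im (cinner (A *v x) x) = 0" for x
  proof -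
    have "cinner (A *v x) x = cnj (cinner (A *v x) x)"
      by (metis herm cinner_commute)
    thus ?thesis by (metis Reals_cnj_iff complex_is_Real_iff)
  qed
  define T where "T = S \<inter> {x. cinner x x = 1}"
  have closedS: "closed S"
  proof -
    have "S = (\<Inter>l\<in>K. {x. cinner x (w l) = 0})" by (auto simp: S_def)
    moreover have "closed {x. cinner x (w l) = 0}" for l
      by (intro closed_Collect_eq continuous_intros)
    ultimately show ?thesis by auto
  qed
  have "closed {x. cinner x x = 1}"
    by (intro closed_Collect_eq continuous_intros)
  hence closedT: "closed T" using closedS unfolding T_def by (intro closed_Int)
  have normT: "norm x = 1" if "x \<in> T" for x
  proof -
    have "(norm x)^2 = 1" using that cinner_self_Re[of x] by (simp add: T_def)
    hence "norm x = 1 \<or> norm x = -1" by (simp add: power2_eq_1_iff)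
    thus ?thesis using norm_ge_zero[of x] by linarith
  qed
  have "bounded T" unfolding bounded_iff using normT by auto
  hence compT: "compact T" using closedT by (simp add: compact_eq_bounded_closed)
  define n1 where "n1 = norm x1"
  have n1: "n1 > 0" using nz(1) by (simp add: n1_def)
  define x2 where "x2 = complex_of_real (1/n1) *s x1"
  have "x2 \<in> S" unfolding x2_def by (rule S_scale) (use nz(2) in \<open>auto simp: S_def\<close>)
  moreover have "cinner x2 x2 = 1"
    using n1 unfolding x2_def cinner_scale_left cinner_scale_right cinner_self[of x1]
    by (simp add: n1_def power2_eq_square)
  ultimately have "T \<noteq> {}" by (auto simp: T_def)
  define g where "g = (\<lambda>x. Re (cinner (A *v x) x))"
  have "continuous_on T g" unfolding g_def by (intro continuous_intros)
  then obtain x0 where x0: "x0 \<in> T" "\<And>y. y \<in> T \<Longrightarrow> g y \<le> g x0"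
    using continuous_attains_sup[OF compT \<open>T \<noteq> {}\<close>] by blast
  define M where "M = g x0"
  have bound: "g y \<le> M * Re (cinner y y)" if y: "y \<in> S" for y
  proof (cases "y = 0")
    case True thus ?thesis by (simp add: g_def)
  next
    case False
    define n where "n = norm y"
    have n: "n > 0" using False by (simp add: n_def)
    define y' where "y' = complex_of_real (1/n) *s y"
    have "cinner y' y' = 1"
      using n unfolding y'_def cinner_scale_left cinner_scale_right cinner_self[of y]
      by (simp add: n_def power2_eq_square)
    moreover have "y' \<in> S" using y S_scale by (simp add: y'_def)
    ultimately have "y' \<in> T" by (simp add: T_def)
    hence "g y' \<le> M" using x0 by (simp add: M_def)
    moreover have "g y' = (1/n)^2 * g y"
      unfolding g_def y'_def cinner_scale_both by simp
    ultimately have "g y \<le> M * n^2" using n by (simp add: field_simps)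
    thus ?thesis by (simp add: cinner_self_Re n_def)
  qed
  have x0S: "x0 \<in> S" and x0n: "cinner x0 x0 = 1" using x0 by (auto simp: T_def)
  have orth: "Re (cinner (A *v x0) y) = M * Re (cinner x0 y)" if y: "y \<in> S" for y
  proof -
    define a where "a = Re (cinner (A *v x0) y)"
    define b where "b = Re (cinner x0 y)"
    have "t * (2*(a - M*b)) + t^2 * (g y - M * Re (cinner y y)) \<le> 0" for t
    proof -
      have mem: "x0 + complex_of_real t *s y \<in> S" using S_add S_scale x0S y by blast
      have e1: "g (x0 + complex_of_real t *s y) = M + 2*t*a + t^2 * g y"
      proof -
        have "cinner (A *v y) x0 = cnj (cinner (A *v x0) y)"
          by (metis herm cinner_commute)
        hence "Re (cinner (A *v y) x0) = a" by (simp add: a_def)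
        thus ?thesis
          by (simp add: g_def M_def a_def mat_vec_add mat_vec_scale cinner_add_left cinner_add_right
              cinner_scale_left cinner_scale_right power2_eq_square algebra_simps)
      qed
      have e2: "Re (cinner (x0 + complex_of_real t *s y) (x0 + complex_of_real t *s y))
          = 1 + 2*t*b + t^2 * Re (cinner y y)"
      proof -
        have "Re (cinner y x0) = b"
          by (subst cinner_commute) (simp add: b_def)
        thus ?thesis using x0n
          by (simp add: b_def cinner_add_left cinner_add_right
              cinner_scale_left cinner_scale_right power2_eq_square algebra_simps)
      qed
      have "M + 2*t*a + t^2 * g y \<le> M * (1 + 2*t*b + t^2 * Re (cinner y y))"
        using bound[OF mem] e1 e2 by simp
      thus ?thesis by (simp add: algebra_simps)
    qed
    hence "2*(a - M*b) = 0" by (rule quad_zero[where q="g y - M * Re (cinner y y)"])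
    thus ?thesis by (simp add: a_def b_def)
  qed
  define z where "z = A *v x0 - complex_of_real M *s x0"
  have zS: "z \<in> S" unfolding z_def using S_diff S_inv S_scale x0S by blast
  have "Re (cinner z z) = 0"
    using orth[OF zS] by (simp add: z_def cinner_diff_left cinner_scale_left)
  hence "z = 0" by (simp add: cinner_self_Re)
  hence "A *v x0 = complex_of_real M *s x0" by (simp add: z_def)
  thus ?thesis using x0S x0n by (auto simp: S_def)
qed

lemma compl_nonzero:
  fixes w :: "'n::finite \<Rightarrow> complex^'n" and K :: "'n set"
  assumes orth: "\<forall>j\<in>K. \<forall>k\<in>K. cinner (w j) (w k) = (if j = k then 1 else 0)"
  and card: "card K < CARD('n)"
  shows "\<exists>x. x \<noteq> 0 \<and> (\<forall>l\<in>K. cinner x (w l) = 0)"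
proof (rule ccontr)
  assume H: "\<not> ?thesis"
  have "v \<in> vec.span (w ` K)" for v
  proof -
    define p where "p = v - (\<Sum>l\<in>K. cinner v (w l) *s w l)"
    have "cinner p (w m) = 0" if m: "m \<in> K" for m
    proof -
      have "cinner p (w m) = cinner v (w m) - (\<Sum>l\<in>K. cinner v (w l) * cinner (w l) (w m))"
        by (simp add: p_def cinner_diff_left cinner_sum_left cinner_scale_left)
      also have "(\<Sum>l\<in>K. cinner v (w l) * cinner (w l) (w m)) = (\<Sum>l\<in>K. if l = m then cinner v (w l) else 0)"
        using m orth by (intro sum.cong) auto
      also have "\<dots> = cinner v (w m)" using m by (simp add: sum.delta')
      finally show ?thesis by simp
    qed
    hence "p = 0" using H by blast
    hence "v = (\<Sum>l\<in>K. cinner v (w l) *s w l)" by (simp add: p_def)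
    also have "\<dots> \<in> vec.span (w ` K)"
      by (intro vec.span_sum vec.span_scale vec.span_base) auto
    finally show ?thesis .
  qed
  hence "(UNIV :: (complex^'n) set) \<subseteq> vec.span (w ` K)" by auto
  hence "vec.dim (UNIV :: (complex^'n) set) \<le> card (w ` K)"
    by (intro vec.dim_le_card) auto
  also have "\<dots> \<le> card K" by (rule card_image_le) simp
  finally show False using card vec_dim_card[where 'a=complex and 'n='n] by simp
qed

lemma eigbasis:
  fixes A :: "complex^'n::finite^'n" and K :: "'n set"
  assumes herm: "\<And>x y. cinner (A *v x) y = cinner x (A *v y)"
  shows "\<exists>w. (\<forall>j\<in>K. \<forall>k\<in>K. cinner (w j) (w k) = (if j = k then 1 else 0))
            \<and> (\<forall>j\<in>K. \<exists>r::real. A *v w j = complex_of_real r *s w j)"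
  using finite[of K]
proof (induction K rule: finite_induct)
  case empty
  show ?case by auto
next
  case (insert a K)
  obtain w where orth: "\<forall>j\<in>K. \<forall>k\<in>K. cinner (w j) (w k) = (if j = k then 1 else 0)"
    and eig: "\<forall>j\<in>K. \<exists>r::real. A *v w j = complex_of_real r *s w j"
    using insert.IH by blast
  have "card (insert a K) \<le> CARD('n)" by (rule card_mono) auto
  hence "card K < CARD('n)" using insert.hyps by simp
  then obtain x1 where x1: "x1 \<noteq> 0" "\<forall>l\<in>K. cinner x1 (w l) = 0"
    using compl_nonzero[OF orth] by blast
  obtain x where x: "\<forall>l\<in>K. cinner x (w l) = 0" "cinner x x = 1"
    "\<exists>r::real. A *v x = complex_of_real r *s x"
    using eig_exists[OF herm, of K w x1] eig x1 by blast
  define w' where "w' = w(a := x)"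
  have x': "cinner (w l) x = 0" if "l \<in> K" for l
    using x(1) that cinner_commute[of "w l" x] by simp
  have "\<forall>j\<in>insert a K. \<forall>k\<in>insert a K. cinner (w' j) (w' k) = (if j = k then 1 else 0)"
    using orth x(1,2) x' insert.hyps(2) by (auto simp: w'_def)
  moreover have "\<forall>j\<in>insert a K. \<exists>r::real. A *v w' j = complex_of_real r *s w' j"
    using eig x(3) insert.hyps(2) by (auto simp: w'_def)
  ultimately show ?case by blast
qed

definition diagm :: "('n::finite \<Rightarrow> real) \<Rightarrow> complex^'n^'n" where
  "diagm d = (\<chi> i j. if i = j then complex_of_real (d i) else 0)"

lemma spectral:
  fixes A :: "complex^'n::finite^'n"
  assumes psd: "psd_mat A"
  shows "\<exists>U d. unitary_mat U \<and> (\<forall>i. d i \<ge> 0) \<and> A = U ** diagm d ** adjoint_mat U"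
proof -
  obtain w :: "'n \<Rightarrow> complex^'n" where orth: "\<forall>j k. cinner (w j) (w k) = (if j = k then 1 else 0)"
    and eig0: "\<forall>j. \<exists>r::real. A *v w j = complex_of_real r *s w j"
    using eigbasis[OF psd_herm[OF psd], of UNIV] by auto
  obtain r where eig: "\<And>j. A *v w j = complex_of_real (r j) *s w j"
    using eig0 by metis
  define U where "U = (\<chi> i j. w j $ i)"
  have "(adjoint_mat U ** U)$j$k = cinner (w k) (w j)" for j k
    by (simp add: matrix_matrix_mult_def adjoint_mat_def U_def cinner_def mult.commute)
  hence UU: "adjoint_mat U ** U = mat 1"
    using orth by (simp add: vec_eq_iff mat_def)
  hence UU2: "U ** adjoint_mat U = mat 1" by (simp add: matrix_left_right_inverse)
  have "(A ** U)$i$j = (U ** diagm r)$i$j" for i j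
  proof -
    have "(A ** U)$i$j = (A *v w j)$i"
      by (simp add: matrix_matrix_mult_def matrix_vector_mult_def U_def)
    also have "\<dots> = complex_of_real (r j) * w j $ i" by (simp add: eig)
    also have "\<dots> = (U ** diagm r)$i$j"
      by (simp add: matrix_matrix_mult_def diagm_def U_def if_distrib[where f="\<lambda>x. _ * x"] sum.delta' mult.commute cong: if_cong)
    finally show ?thesis .
  qed
  hence AU: "A ** U = U ** diagm r" by (simp add: vec_eq_iff)
  have "A = A ** (U ** adjoint_mat U)" by (simp add: UU2)
  also have "\<dots> = U ** diagm r ** adjoint_mat U" by (simp add: matrix_mul_assoc AU)
  finally have Aeq: "A = U ** diagm r ** adjoint_mat U" .
  have "r j \<ge> 0" for j
  proof -
    have "cinner (A *v w j) (w j) = complex_of_real (r j)"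
      using orth by (simp add: eig cinner_scale_left)
    thus ?thesis using psd unfolding psd_mat_def by (metis Complex_Order.less_eq_complex_def Re_complex_of_real zero_complex.sel(1))
  qed
  thus ?thesis using UU UU2 Aeq unfolding unitary_mat_def by blast
qed

type_synonym 'n cmat = "complex^'n^'n"

lemma diagm_nth: "diagm d $ i $ j = (if i = j then complex_of_real (d i) else 0)"
  by (simp add: diagm_def)

lemma diagm_right: "((X::'n::finite cmat) ** diagm d)$i$j = X$i$j * complex_of_real (d j)"
  by (simp add: matrix_matrix_mult_def diagm_def if_distrib[where f="\<lambda>x. _ * x"] sum.delta' cong: if_cong)

lemma diagm_left: "(diagm d ** (X::'n::finite cmat))$i$j = complex_of_real (d i) * X$i$j"
  by (simp add: matrix_matrix_mult_def diagm_def if_distrib[where f="\<lambda>x. x * _"] sum.delta cong: if_cong)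

lemma diagm_mult: "diagm d ** diagm e = diagm (\<lambda>i. d i * e i)"
  by (simp add: vec_eq_iff diagm_right) (simp add: diagm_def)

lemma diagm_diff: "diagm d - diagm e = diagm (\<lambda>i. d i - e i)"
  by (simp add: vec_eq_iff diagm_def)

lemma diagm_const: "diagm (\<lambda>_. c) = mat (complex_of_real c)"
  by (simp add: vec_eq_iff diagm_def mat_def)

lemma adjoint_mult: "adjoint_mat ((X::'n::finite cmat) ** Y) = adjoint_mat Y ** adjoint_mat X"
  by (simp add: vec_eq_iff adjoint_mat_def matrix_matrix_mult_def mult.commute)

lemma adjoint_adjoint[simp]: "adjoint_mat (adjoint_mat X) = X"
  by (simp add: vec_eq_iff adjoint_mat_def)

lemma adjoint_diagm[simp]: "adjoint_mat (diagm d) = diagm d"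
  by (simp add: vec_eq_iff adjoint_mat_def diagm_def)

lemma mat_sub_ldistrib: "(X::'n::finite cmat) ** (Y - Z) = X ** Y - X ** Z"
  by (simp add: vec_eq_iff matrix_matrix_mult_def right_diff_distrib sum_subtractf)

lemma mat_sub_rdistrib: "((Y::'n::finite cmat) - Z) ** X = Y ** X - Z ** X"
  by (simp add: vec_eq_iff matrix_matrix_mult_def left_diff_distrib sum_subtractf)

lemma mat_scalar_mult: "(X::'n::finite cmat) ** mat c = (\<chi> i j. X$i$j * c)"
  by (simp add: vec_eq_iff matrix_matrix_mult_def mat_def if_distrib[where f="\<lambda>x. _ * x"] sum.delta' cong: if_cong)

lemma unitary_conj_const:
  assumes "unitary_mat (U::'n::finite cmat)"
  shows "U ** mat c ** adjoint_mat U = mat c"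
proof -
  have "(U ** mat c ** adjoint_mat U)$i$j = c * (U ** adjoint_mat U)$i$j" for i j
    unfolding mat_scalar_mult by (simp add: matrix_matrix_mult_def sum_distrib_left mult_ac)
  thus ?thesis using assms by (simp add: vec_eq_iff unitary_mat_def mat_def)
qed

lemma diag_real_diagm: "diag_real_mat (diagm d)"
  by (simp add: diag_real_mat_def diagm_def)

lemma diag_real_eq: "diag_real_mat D \<Longrightarrow> D = diagm (\<lambda>i. Re (D$i$i))"
  unfolding diag_real_mat_def diagm_def by (auto simp: vec_eq_iff)

lemma fD_eq: "(\<chi> i j. if i = j then complex_of_real (g (Re (D$i$i))) else 0) = diagm (\<lambda>i. g (Re (D$i$i)))"
  by (simp add: diagm_def)

lemma calc_unique:
  fixes U V :: "'n::finite cmat"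
  assumes U: "unitary_mat U" and V: "unitary_mat V"
    and eq: "U ** diagm d ** adjoint_mat U = V ** diagm e ** adjoint_mat V"
  shows "U ** diagm (\<lambda>i. g (d i)) ** adjoint_mat U = V ** diagm (\<lambda>i. g (e i)) ** adjoint_mat V"
proof -
  have UU: "adjoint_mat U ** U = mat 1" "U ** adjoint_mat U = mat 1"
    and VV: "adjoint_mat V ** V = mat 1" "V ** adjoint_mat V = mat 1"
    using U V by (auto simp: unitary_mat_def)
  define W where "W = adjoint_mat V ** U"
  have "W ** diagm d = adjoint_mat V ** (U ** diagm d ** adjoint_mat U) ** U"
    by (simp add: W_def matrix_mul_assoc[symmetric] UU)
  also have "\<dots> = adjoint_mat V ** (V ** diagm e ** adjoint_mat V) ** U" by (simp add: eq)
  also have "\<dots> = diagm e ** W"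
    by (simp add: W_def matrix_mul_assoc VV)
  finally have WD: "W ** diagm d = diagm e ** W" .
  have "(W ** diagm (\<lambda>i. g (d i)))$i$j = (diagm (\<lambda>i. g (e i)) ** W)$i$j" for i j
  proof (cases "W$i$j = 0")
    case True thus ?thesis by (simp add: diagm_left diagm_right)
  next
    case False
    have "W$i$j * complex_of_real (d j) = complex_of_real (e i) * W$i$j"
      using arg_cong[OF WD, of "\<lambda>M. M$i$j"] by (simp add: diagm_left diagm_right)
    hence "d j = e i" using False by (simp add: mult.commute)
    thus ?thesis by (simp add: diagm_left diagm_right mult.commute)
  qed
  hence WG: "W ** diagm (\<lambda>i. g (d i)) = diagm (\<lambda>i. g (e i)) ** W" by (simp add: vec_eq_iff)
  have "U ** diagm (\<lambda>i. g (d i)) ** adjoint_mat U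
      = V ** (W ** diagm (\<lambda>i. g (d i))) ** adjoint_mat U"
    by (simp add: W_def matrix_mul_assoc VV)
  also have "\<dots> = V ** (diagm (\<lambda>i. g (e i)) ** W) ** adjoint_mat U" by (simp add: WG)
  also have "\<dots> = V ** diagm (\<lambda>i. g (e i)) ** adjoint_mat V"
    by (simp add: W_def matrix_mul_assoc[symmetric] UU)
  finally show ?thesis .
qed

lemma mat_fun_diag:
  fixes U :: "'n::finite cmat"
  assumes U: "unitary_mat U"
  shows "mat_fun g (U ** diagm d ** adjoint_mat U) = U ** diagm (\<lambda>i. g (d i)) ** adjoint_mat U"
  unfolding mat_fun_def
proof (rule the_equality)
  show "\<exists>Ua D. unitary_mat Ua \<and> diag_real_mat D \<and> U ** diagm d ** adjoint_mat U = Ua ** D ** adjoint_mat Ua \<and>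
      U ** diagm (\<lambda>i. g (d i)) ** adjoint_mat U =
      Ua ** (\<chi> i j. if i = j then complex_of_real (g (Re (D $ i $ i))) else 0) ** adjoint_mat Ua"
  proof -
    have "(\<chi> i j. if i = j then complex_of_real (g (Re (diagm d $ i $ i))) else 0) = diagm (\<lambda>i. g (d i))"
      by (simp add: vec_eq_iff diagm_nth)
    thus ?thesis using U diag_real_diagm[of d] by (intro exI[of _ U] exI[of _ "diagm d"]) simp
  qed
next
  fix B
  assume "\<exists>Ua D. unitary_mat Ua \<and> diag_real_mat D \<and> U ** diagm d ** adjoint_mat U = Ua ** D ** adjoint_mat Ua \<and>
      B = Ua ** (\<chi> i j. if i = j then complex_of_real (g (Re (D $ i $ i))) else 0) ** adjoint_mat Ua"
  then obtain V D where V: "unitary_mat V" "diag_real_mat D"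
    "U ** diagm d ** adjoint_mat U = V ** D ** adjoint_mat V"
    "B = V ** (\<chi> i j. if i = j then complex_of_real (g (Re (D $ i $ i))) else 0) ** adjoint_mat V"
    by blast
  have D: "D = diagm (\<lambda>i. Re (D$i$i))" using diag_real_eq[OF V(2)] .
  have "U ** diagm (\<lambda>i. g (d i)) ** adjoint_mat U = V ** diagm (\<lambda>i. g (Re (D$i$i))) ** adjoint_mat V"
    using calc_unique[OF U V(1), of d "\<lambda>i. Re (D$i$i)" g] V(3) D by simp
  thus "B = U ** diagm (\<lambda>i. g (d i)) ** adjoint_mat U" using V(4) by (simp add: fD_eq)
qed


lemma diagm_vec: "(diagm h *v z)$i = complex_of_real (h i) * z$i"
  by (simp add: matrix_vector_mult_def diagm_nth if_distrib[where f="\<lambda>x. x * _"] sum.delta cong: if_cong)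

lemma quad_form:
  fixes U :: "'n::finite cmat"
  shows "cinner ((U ** diagm h ** adjoint_mat U) *v u) u
       = complex_of_real (\<Sum>i\<in>UNIV. h i * (cmod ((adjoint_mat U *v u)$i))^2)"
proof -
  define z where "z = adjoint_mat U *v u"
  have "(U ** diagm h ** adjoint_mat U) *v u = U *v (diagm h *v z)"
    by (simp add: z_def matrix_vector_mul_assoc matrix_mul_assoc)
  hence "cinner ((U ** diagm h ** adjoint_mat U) *v u) u = cinner (diagm h *v z) z"
    by (simp add: cinner_mat z_def)
  also have "\<dots> = (\<Sum>i\<in>UNIV. complex_of_real (h i) * (z$i * cnj (z$i)))"
    unfolding cinner_def by (simp add: diagm_vec mult.assoc)
  also have "\<dots> = complex_of_real (\<Sum>i\<in>UNIV. h i * (cmod (z$i))^2)"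
    by (simp add: complex_norm_square[symmetric])
  finally show ?thesis by (simp add: z_def)
qed

lemma trace_onb:
  fixes M :: "'n::finite cmat"
  assumes "orthonormal_basis u"
  shows "trace M = (\<Sum>j\<in>UNIV. cinner (M *v u j) (u j))"
proof -
  define Q :: "'n cmat" where "Q = (\<chi> i j. u j $ i)"
  have "(adjoint_mat Q ** Q)$j$k = cinner (u k) (u j)" for j k
    by (simp add: matrix_matrix_mult_def adjoint_mat_def Q_def cinner_def mult.commute)
  hence "adjoint_mat Q ** Q = mat 1"
    using assms by (simp add: vec_eq_iff mat_def orthonormal_basis_def)
  hence QQ: "Q ** adjoint_mat Q = mat 1" by (simp add: matrix_left_right_inverse)
  have E: "(\<Sum>j\<in>UNIV. u j $ k * cnj (u j $ i)) = (if k = i then 1 else 0)" for k i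
  proof -
    have "(Q ** adjoint_mat Q)$k$i = (\<Sum>j\<in>UNIV. u j $ k * cnj (u j $ i))"
      by (simp add: matrix_matrix_mult_def adjoint_mat_def Q_def)
    thus ?thesis using QQ by (simp add: mat_def)
  qed
  have "(\<Sum>j\<in>UNIV. cinner (M *v u j) (u j))
      = (\<Sum>j\<in>UNIV. \<Sum>i\<in>UNIV. \<Sum>k\<in>UNIV. M$i$k * (u j $ k * cnj (u j $ i)))"
    unfolding cinner_def matrix_vector_mult_def by (simp add: sum_distrib_right mult.assoc)
  also have "\<dots> = (\<Sum>i\<in>UNIV. \<Sum>j\<in>UNIV. \<Sum>k\<in>UNIV. M$i$k * (u j $ k * cnj (u j $ i)))"
    by (rule sum.swap)
  also have "\<dots> = (\<Sum>i\<in>UNIV. \<Sum>k\<in>UNIV. \<Sum>j\<in>UNIV. M$i$k * (u j $ k * cnj (u j $ i)))"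
    by (rule sum.cong[OF refl], rule sum.swap)
  also have "\<dots> = (\<Sum>i\<in>UNIV. \<Sum>k\<in>UNIV. M$i$k * (if k = i then 1 else 0))"
    by (simp add: sum_distrib_left[symmetric] E)
  also have "\<dots> = trace M"
    by (simp add: trace_def if_distrib[where f="\<lambda>x. _ * x"] sum.delta' cong: if_cong)
  finally show ?thesis by simp
qed

lemma abs_calc:
  fixes U :: "'n::finite cmat"
  assumes U: "unitary_mat U"
  shows "mat_fun f (mat_abs (U ** diagm d ** adjoint_mat U - mat (complex_of_real s)))
       = U ** diagm (\<lambda>i. f \<bar>d i - s\<bar>) ** adjoint_mat U"
proof -
  have UU: "adjoint_mat U ** U = mat 1" using U by (simp add: unitary_mat_def)
  define e where "e = (\<lambda>i. d i - s)"
  have "U ** diagm d ** adjoint_mat U - mat (complex_of_real s)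
      = U ** diagm d ** adjoint_mat U - U ** diagm (\<lambda>_. s) ** adjoint_mat U"
    using unitary_conj_const[OF U] by (simp add: diagm_const)
  also have "\<dots> = U ** diagm e ** adjoint_mat U"
    by (simp add: mat_sub_ldistrib[symmetric] mat_sub_rdistrib[symmetric] diagm_diff e_def
        matrix_mul_assoc[symmetric])
  finally have X: "U ** diagm d ** adjoint_mat U - mat (complex_of_real s) = U ** diagm e ** adjoint_mat U" .
  have adjX: "adjoint_mat (U ** diagm e ** adjoint_mat U) = U ** diagm e ** adjoint_mat U"
    by (simp add: adjoint_mult matrix_mul_assoc)
  have "adjoint_mat (U ** diagm e ** adjoint_mat U) ** (U ** diagm e ** adjoint_mat U)
      = U ** diagm e ** (adjoint_mat U ** U) ** diagm e ** adjoint_mat U"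
    unfolding adjX by (simp add: matrix_mul_assoc)
  also have "\<dots> = U ** diagm (\<lambda>i. e i * e i) ** adjoint_mat U"
    by (simp add: UU diagm_mult matrix_mul_assoc[symmetric])
  finally have "mat_abs (U ** diagm e ** adjoint_mat U) = U ** diagm (\<lambda>i. sqrt (e i * e i)) ** adjoint_mat U"
    unfolding mat_abs_def by (simp add: mat_fun_diag[OF U])
  also have "(\<lambda>i. sqrt (e i * e i)) = (\<lambda>i. \<bar>d i - s\<bar>)"
    by (simp add: e_def real_sqrt_mult_self)
  finally show ?thesis unfolding X by (simp add: mat_fun_diag[OF U])
qed


theorem proposition3p3:
  fixes f :: "real \<Rightarrow> real" and A :: "complex^'n^'n" and u :: "'n \<Rightarrow> complex^'n"
  assumes "continuous_on {0..} f"
    and "superquadratic f"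
    and "psd_mat A"
    and "orthonormal_basis u"
  shows "(\<Sum>j\<in>UNIV. complex_of_real (f (Re (cinner (A *v u j) (u j)))))
           + (\<Sum>j\<in>UNIV. cinner (mat_fun f (mat_abs (A - mat (cinner (A *v u j) (u j)))) *v u j) (u j))
         \<le> trace (mat_fun f A)
       \<and> ((\<forall>t\<ge>0. f t \<ge> 0) \<and> (\<forall>j. is_eigenvector A (u j)) \<longrightarrow>
         (\<Sum>j\<in>UNIV. complex_of_real (f (Re (cinner (A *v u j) (u j)))))
           + (\<Sum>j\<in>UNIV. cinner (mat_fun f (mat_abs (A - mat (cinner (A *v u j) (u j)))) *v u j) (u j))
         = trace (mat_fun f A))"
proof -
  note sq = assms(2) and psd = assms(3) and onb = assms(4)
  obtain U d where U: "unitary_mat U" and d0: "\<And>i. d i \<ge> 0"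
    and Aeq: "A = U ** diagm d ** adjoint_mat U"
    using spectral[OF psd] by blast
  have UU: "adjoint_mat U ** U = mat 1" using U by (simp add: unitary_mat_def)
  define w where "w j i = (cmod ((adjoint_mat U *v u j)$i))^2" for j i
  define \<sigma> where "\<sigma> j = (\<Sum>i\<in>UNIV. d i * w j i)" for j
  have w0: "w j i \<ge> 0" for j i by (simp add: w_def)
  have wsum: "(\<Sum>i\<in>UNIV. w j i) = 1" for j
  proof -
    have "cinner ((U ** diagm (\<lambda>_. 1) ** adjoint_mat U) *v u j) (u j) = 1"
      using onb U by (simp add: diagm_const orthonormal_basis_def unitary_mat_def)
    thus ?thesis unfolding quad_form w_def by (simp only: mult_1 of_real_eq_1_iff)
  qed
  have s: "cinner (A *v u j) (u j) = complex_of_real (\<sigma> j)" for j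
    unfolding Aeq quad_form by (simp add: \<sigma>_def w_def)
  have \<sigma>0: "\<sigma> j \<ge> 0" for j unfolding \<sigma>_def using d0 w0 by (intro sum_nonneg mult_nonneg_nonneg) auto
  have t1: "complex_of_real (f (Re (cinner (A *v u j) (u j)))) = complex_of_real (f (\<sigma> j))" for j
    by (simp add: s)
  have t2: "cinner (mat_fun f (mat_abs (A - mat (cinner (A *v u j) (u j)))) *v u j) (u j)
      = complex_of_real (\<Sum>i\<in>UNIV. f \<bar>d i - \<sigma> j\<bar> * w j i)" for j
    unfolding s unfolding Aeq abs_calc[OF U] quad_form by (simp add: w_def)
  have tr: "trace (mat_fun f A) = (\<Sum>j\<in>UNIV. complex_of_real (\<Sum>i\<in>UNIV. f (d i) * w j i))"
    unfolding trace_onb[OF onb] Aeq mat_fun_diag[OF U] quad_form by (simp add: w_def)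
  have LHS: "(\<Sum>j\<in>UNIV. complex_of_real (f (Re (cinner (A *v u j) (u j)))))
           + (\<Sum>j\<in>UNIV. cinner (mat_fun f (mat_abs (A - mat (cinner (A *v u j) (u j)))) *v u j) (u j))
        = complex_of_real (\<Sum>j\<in>UNIV. f (\<sigma> j) + (\<Sum>i\<in>UNIV. f \<bar>d i - \<sigma> j\<bar> * w j i))"
    by (simp add: t1 t2 sum.distrib)
  have RHS: "trace (mat_fun f A) = complex_of_real (\<Sum>j\<in>UNIV. \<Sum>i\<in>UNIV. f (d i) * w j i)"
    by (simp add: tr)
  have key: "f (\<sigma> j) + (\<Sum>i\<in>UNIV. f \<bar>d i - \<sigma> j\<bar> * w j i) \<le> (\<Sum>i\<in>UNIV. f (d i) * w j i)" for j
  proof -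
    obtain C where C: "\<And>t. t \<ge> 0 \<Longrightarrow> f t \<ge> f (\<sigma> j) + C * (t - \<sigma> j) + f \<bar>t - \<sigma> j\<bar>"
      using sq \<sigma>0[of j] unfolding superquadratic_def by blast
    have "(\<Sum>i\<in>UNIV. (f (\<sigma> j) + C * (d i - \<sigma> j) + f \<bar>d i - \<sigma> j\<bar>) * w j i) \<le> (\<Sum>i\<in>UNIV. f (d i) * w j i)"
      using C d0 w0 by (intro sum_mono mult_right_mono) auto
    moreover have "(\<Sum>i\<in>UNIV. (f (\<sigma> j) + C * (d i - \<sigma> j) + f \<bar>d i - \<sigma> j\<bar>) * w j i)
        = f (\<sigma> j) * (\<Sum>i\<in>UNIV. w j i) + C * ((\<Sum>i\<in>UNIV. d i * w j i) - \<sigma> j * (\<Sum>i\<in>UNIV. w j i))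
          + (\<Sum>i\<in>UNIV. f \<bar>d i - \<sigma> j\<bar> * w j i)"
      by (simp add: algebra_simps sum.distrib sum_distrib_left sum_subtractf)
    ultimately show ?thesis by (simp add: wsum \<sigma>_def)
  qed
  have part1: "(\<Sum>j\<in>UNIV. f (\<sigma> j) + (\<Sum>i\<in>UNIV. f \<bar>d i - \<sigma> j\<bar> * w j i)) \<le> (\<Sum>j\<in>UNIV. \<Sum>i\<in>UNIV. f (d i) * w j i)"
    using key by (rule sum_mono)
  have part2: "(\<Sum>j\<in>UNIV. f (\<sigma> j) + (\<Sum>i\<in>UNIV. f \<bar>d i - \<sigma> j\<bar> * w j i)) = (\<Sum>j\<in>UNIV. \<Sum>i\<in>UNIV. f (d i) * w j i)"
    if fpos: "\<forall>t\<ge>0. f t \<ge> 0" and eig: "\<forall>j. is_eigenvector A (u j)"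
  proof -
    have f0: "f 0 = 0"
    proof -
      obtain C where "\<And>t. t \<ge> 0 \<Longrightarrow> f t \<ge> f 0 + C * (t - 0) + f \<bar>t - 0\<bar>"
        using sq unfolding superquadratic_def by force
      from this[of 0] fpos show ?thesis by force
    qed
    have AU: "adjoint_mat U ** A = diagm d ** adjoint_mat U"
      unfolding Aeq by (simp add: matrix_mul_assoc UU)
    have eq: "d i = \<sigma> j" if "w j i \<noteq> 0" for i j
    proof -
      obtain c where c: "A *v u j = c *s u j" using eig unfolding is_eigenvector_def by blast
      have "c = complex_of_real (\<sigma> j)"
        using s[of j] onb by (simp add: c cinner_scale_left orthonormal_basis_def)
      have "diagm d *v (adjoint_mat U *v u j) = adjoint_mat U *v (A *v u j)"
        by (simp add: matrix_vector_mul_assoc AU)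
      also have "\<dots> = c *s (adjoint_mat U *v u j)" by (simp add: c mat_vec_scale)
      finally have "complex_of_real (d i) * (adjoint_mat U *v u j)$i = c * (adjoint_mat U *v u j)$i"
        by (metis diagm_vec vector_smult_component)
      moreover have "(adjoint_mat U *v u j)$i \<noteq> 0" using that by (auto simp: w_def)
      ultimately have "complex_of_real (d i) = c" by simp
      with \<open>c = _\<close> show ?thesis by simp
    qed
    have "f (\<sigma> j) + (\<Sum>i\<in>UNIV. f \<bar>d i - \<sigma> j\<bar> * w j i) = (\<Sum>i\<in>UNIV. f (d i) * w j i)" for j
    proof -
      have "(\<Sum>i\<in>UNIV. f \<bar>d i - \<sigma> j\<bar> * w j i) = 0"
        by (rule sum.neutral) (use eq f0 in force)
      moreover have "(\<Sum>i\<in>UNIV. f (d i) * w j i) = (\<Sum>i\<in>UNIV. f (\<sigma> j) * w j i)"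
        by (rule sum.cong[OF refl]) (use eq in force)
      ultimately show ?thesis by (simp add: sum_distrib_left[symmetric] wsum)
    qed
    thus ?thesis by simp
  qed
  show ?thesis
    unfolding LHS RHS using part1 part2 by (simp add: less_eq_complex_def)
qed

end
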